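(* Let $m\ge n$ and let $C_1,\dots,C_m\subseteq\mathbb{S}$ be nonempty s-convex sets. If $\bigcap_{j\in J}C_j\neq\emptyset$ for every $J\subseteq\{1,\dots,m\}$ with $\operatorname{card}J=n$, and $\bigcup_{j\in J}C_j\neq\mathbb{S}$ for every $J\subseteq\{1,\dots,m\}$ with $\operatorname{card}J=n+1$, then $\bigcap_{i=1}^mC_i\neq\emptyset$.
   Context: Standing setting: $n\ge 2$; $o$ denotes the zero vector of $\mathbb{R}^n$. $\Phi:\mathbb{R}^n\to\mathbb{R}_+:=[0,\infty)$ is a continuous function with $\Phi(tx)=t\Phi(x)$ for all $x\in\mathbb{R}^n$, $t\ge 0$, and $\Phi(x)=0$ iff $x=o$. Set $\mathbb{S}:=\{x\in\mathbb{R}^n\mid \Phi(x)=1\}$ and $\rho:\mathbb{R}^n\to\{o\}\cup\mathbb{S}$, $\rho(x):=x/\Phi(x)$ for $x\neq o$, $\rho(o):=o$. For $x,y\in\mathbb{S}$, $\lambda\in[0,1]$, $\lambda x+_s(1-\lambda)y:=\rho(\lambda x+(1-\lambda)y)$. A nonempty set $S\subseteq\mathbb{S}$ is called s-convex if $\lambda x+_s(1-\lambda)y\in S$ for all $x,y\in S$ and $\lambda\in[0,1]$. *)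

theory Defs
  imports "HOL-Analysis.Analysis"
begin

definition gauge :: "('a::real_normed_vector \<Rightarrow> real) \<Rightarrow> bool" where
  "gauge Phi \<longleftrightarrow> continuous_on UNIV Phi \<and> (\<forall>x. Phi x \<ge> 0)
     \<and> (\<forall>x t. t \<ge> 0 \<longrightarrow> Phi (t *\<^sub>R x) = t * Phi x)
     \<and> (\<forall>x. Phi x = 0 \<longleftrightarrow> x = 0)"

definition gsphere :: "('a::real_normed_vector \<Rightarrow> real) \<Rightarrow> 'a set" where
  "gsphere Phi = {x. Phi x = 1}"

definition rho :: "('a::real_normed_vector \<Rightarrow> real) \<Rightarrow> 'a \<Rightarrow> 'a" where
  "rho Phi x = (if x = 0 then 0 else (1 / Phi x) *\<^sub>R x)"

definition scomb :: "('a::real_normed_vector \<Rightarrow> real) \<Rightarrow> real \<Rightarrow> 'a \<Rightarrow> 'a \<Rightarrow> 'a" where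
  "scomb Phi l x y = rho Phi (l *\<^sub>R x + (1 - l) *\<^sub>R y)"

definition s_convex :: "('a::real_normed_vector \<Rightarrow> real) \<Rightarrow> 'a set \<Rightarrow> bool" where
  "s_convex Phi S \<longleftrightarrow> S \<noteq> {} \<and> S \<subseteq> gsphere Phi \<and>
     (\<forall>x\<in>S. \<forall>y\<in>S. \<forall>l. 0 \<le> l \<and> l \<le> 1 \<longrightarrow> scomb Phi l x y \<in> S)"

end

theory Submission
  imports Defs
begin

lemma dep_family:
  fixes x :: "'i \<Rightarrow> 'a::euclidean_space"
  assumes "finite J" "card J > DIM('a)"
  shows "\<exists>c. (\<exists>i\<in>J. c i \<noteq> 0) \<and> (\<Sum>i\<in>J. c i *\<^sub>R x i) = 0"
proof (cases "inj_on x J")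
  case False
  then obtain i j where ij: "i\<in>J" "j\<in>J" "i\<noteq>j" "x i = x j" by (auto simp: inj_on_def)
  define c where "c = (\<lambda>l. if l = i then 1 else if l = j then -1 else (0::real))"
  have "(\<Sum>l\<in>J. c l *\<^sub>R x l) = (\<Sum>l\<in>{i,j}. c l *\<^sub>R x l)"
    by (rule sum.mono_neutral_right) (use ij assms(1) in \<open>auto simp: c_def\<close>)
  also have "\<dots> = 0" using ij by (simp add: c_def)
  finally show ?thesis using ij by (intro exI[of _ c]) (auto simp: c_def)
next
  case True
  have "card (x ` J) > DIM('a)" using True assms by (simp add: card_image)
  then have "dependent (x ` J)" using independent_bound[of "x ` J"] by linarith
  have finx: "finite (x ` J)" using assms(1) by simp
  from \<open>dependent (x ` J)\<close> obtain u where u: "\<exists>v\<in>x ` J. u v \<noteq> 0" "(\<Sum>v\<in>x ` J. u v *\<^sub>R v) = 0"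
    unfolding real_vector.dependent_finite[OF finx] by blast
  have "(\<Sum>i\<in>J. u (x i) *\<^sub>R x i) = 0" using u(2) True by (simp add: sum.reindex)
  then show ?thesis using u(1) by (intro exI[of _ "u \<circ> x"]) auto
qed

lemma cone_sum:
  fixes y :: "'i \<Rightarrow> 'a::real_vector"
  assumes add: "\<And>a b. a\<in>K \<Longrightarrow> b\<in>K \<Longrightarrow> a+b\<in>K"
    and sc: "\<And>a t. a\<in>K \<Longrightarrow> t>0 \<Longrightarrow> t *\<^sub>R a \<in> K"
    and "finite I" "\<forall>i\<in>I. c i \<ge> (0::real)" "\<forall>i\<in>I. c i > 0 \<longrightarrow> y i \<in> K" "\<exists>i\<in>I. c i > 0"
  shows "(\<Sum>i\<in>I. c i *\<^sub>R y i) \<in> K"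
  using assms(3-)
proof (induction I rule: finite_induct)
  case empty thus ?case by simp
next
  case (insert a I)
  show ?case
  proof (cases "\<exists>i\<in>I. c i > 0")
    case True
    then have s: "(\<Sum>i\<in>I. c i *\<^sub>R y i) \<in> K" using insert by auto
    show ?thesis
    proof (cases "c a > 0")
      case True then have "c a *\<^sub>R y a \<in> K" using insert sc by auto
      then show ?thesis using s add insert(1,2) by simp
    next
      case False then have "c a = 0" using insert by force
      then show ?thesis using s insert(1,2) by simp
    qed
  next
    case False
    then have "\<forall>i\<in>I. c i = 0" using insert by force
    then have "(\<Sum>i\<in>I. c i *\<^sub>R y i) = 0" by simp
    moreover have "c a > 0" using False insert by auto
    ultimately show ?thesis using insert sc by simp
  qed
qed

lemma core:
  fixes K :: "'j \<Rightarrow> 'a::euclidean_space set" and x :: "'j \<Rightarrow> 'a"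
  assumes add: "\<And>j a b. j\<in>J \<Longrightarrow> a\<in>K j \<Longrightarrow> b\<in>K j \<Longrightarrow> a+b\<in>K j"
    and sc: "\<And>j a t. j\<in>J \<Longrightarrow> a\<in>K j \<Longrightarrow> t>0 \<Longrightarrow> t *\<^sub>R a \<in> K j"
    and nz: "\<And>j. j\<in>J \<Longrightarrow> 0 \<notin> K j"
    and fin: "finite J" and cardJ: "card J = DIM('a)+1"
    and xK: "\<And>i j. i\<in>J \<Longrightarrow> j\<in>J \<Longrightarrow> i\<noteq>j \<Longrightarrow> x i \<in> K j"
    and p0: "p \<noteq> 0" and pK: "\<And>j. j\<in>J \<Longrightarrow> p \<notin> K j"
  shows "\<exists>z. \<forall>j\<in>J. z \<in> K j"
proof (rule ccontr)
  assume nc: "\<nexists>z. \<forall>j\<in>J. z \<in> K j"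
  have CS: "(\<Sum>i\<in>J. c i *\<^sub>R x i) \<in> K k"
    if "k\<in>J" "\<forall>i\<in>J. c i \<ge> 0" "c k = 0" "\<exists>i\<in>J. c i > 0" for k c
  proof (rule cone_sum[where K="K k"])
    show "\<forall>i\<in>J. 0 < c i \<longrightarrow> x i \<in> K k" using that xK by (metis less_irrefl)
  qed (use that add sc fin in auto)
  have M: False if s: "(\<Sum>i\<in>J. c i *\<^sub>R x i) = 0" and ij: "i\<in>J" "c i > 0" "j\<in>J" "c j < 0" for c i j
  proof -
    define z1 where "z1 = (\<Sum>i\<in>J. max (c i) 0 *\<^sub>R x i)"
    define z2 where "z2 = (\<Sum>i\<in>J. max (- c i) 0 *\<^sub>R x i)"
    have "(\<Sum>i\<in>J. c i *\<^sub>R x i) = (\<Sum>i\<in>J. (max (c i) 0 - max (- c i) 0) *\<^sub>R x i)"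
      by (rule sum.cong) auto
    also have "\<dots> = z1 - z2" by (simp add: z1_def z2_def scaleR_diff_left sum_subtractf)
    finally have "z1 = z2" using s by simp
    have "z1 \<in> K k" if "k \<in> J" for k
    proof (cases "c k \<le> 0")
      case True
      show ?thesis unfolding z1_def by (rule CS) (use that True ij in \<open>auto intro!: bexI[of _ i]\<close>)
    next
      case False
      show ?thesis unfolding \<open>z1 = z2\<close> z2_def by (rule CS) (use that False ij in \<open>auto intro!: bexI[of _ j]\<close>)
    qed
    then show False using nc by blast
  qed
  have Z: False if "\<forall>i\<in>J. c i \<ge> 0" "k\<in>J" "c k = 0" "\<exists>i\<in>J. c i > 0" "(\<Sum>i\<in>J. c i *\<^sub>R x i) = 0" for c k
    using CS[OF that(2,1,3,4)] that(5) nz that(2) by simp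
  have pos: "\<exists>b. (\<forall>i\<in>J. b i > 0) \<and> (\<Sum>i\<in>J. b i *\<^sub>R x i) = 0"
    if s: "(\<Sum>i\<in>J. c i *\<^sub>R x i) = 0" and ne: "\<exists>i\<in>J. c i \<noteq> 0" for c
  proof -
    define b where "b = (if \<exists>i\<in>J. c i > 0 then c else (\<lambda>i. - c i))"
    have sb: "(\<Sum>i\<in>J. b i *\<^sub>R x i) = 0" using s by (simp add: b_def sum_negf)
    have bp: "\<exists>i\<in>J. b i > 0" using ne by (auto simp: b_def) (metis linorder_neqE_linordered_idom neg_0_less_iff_less)
    have bnn: "\<forall>i\<in>J. b i \<ge> 0" using M[OF sb] bp by (meson not_le)
    have "\<forall>i\<in>J. b i > 0" using Z[OF bnn _ _ bp sb] bnn by force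
    then show ?thesis using sb by blast
  qed
  have pm: "(\<forall>i\<in>J. c i > 0) \<or> (\<forall>i\<in>J. c i < 0)"
    if s: "(\<Sum>i\<in>J. c i *\<^sub>R x i) = 0" and ne: "\<exists>i\<in>J. c i \<noteq> 0" for c
  proof -
    define b where "b = (if \<exists>i\<in>J. c i > 0 then c else (\<lambda>i. - c i))"
    have sb: "(\<Sum>i\<in>J. b i *\<^sub>R x i) = 0" using s by (simp add: b_def sum_negf)
    have bp: "\<exists>i\<in>J. b i > 0" using ne by (auto simp: b_def) (metis linorder_neqE_linordered_idom neg_0_less_iff_less)
    have bnn: "\<forall>i\<in>J. b i \<ge> 0" using M[OF sb] bp by (meson not_le)
    have "\<forall>i\<in>J. b i > 0" using Z[OF bnn _ _ bp sb] bnn by force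
    then show ?thesis by (auto simp: b_def split: if_splits)
  qed
  have "card J > DIM('a)" using cardJ by simp
  then obtain a0 where a0: "\<exists>i\<in>J. a0 i \<noteq> 0" "(\<Sum>i\<in>J. a0 i *\<^sub>R x i) = 0"
    using dep_family[OF fin] by blast
  obtain a where a: "\<forall>i\<in>J. a i > 0" "(\<Sum>i\<in>J. a i *\<^sub>R x i) = 0" using pos[OF a0(2,1)] by blast
  have "J \<noteq> {}" using cardJ by auto
  then obtain k where k: "k \<in> J" by blast
  define y where "y = x(k := p)"
  obtain c where c: "\<exists>i\<in>J. c i \<noteq> 0" "(\<Sum>i\<in>J. c i *\<^sub>R y i) = 0"
    using dep_family[OF fin, of y] \<open>card J > DIM('a)\<close> by blast
  have ck: "c k \<noteq> 0"
  proof
    assume ck: "c k = 0"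
    have "(\<Sum>i\<in>J. c i *\<^sub>R x i) = (\<Sum>i\<in>J. c i *\<^sub>R y i)" by (rule sum.cong) (auto simp: y_def ck)
    then show False using pm[of c] c ck k by auto
  qed
  have sumy: "(\<Sum>i\<in>J. c i *\<^sub>R y i) = c k *\<^sub>R p + (\<Sum>i\<in>J-{k}. c i *\<^sub>R x i)"
    by (simp add: sum.remove[OF fin k] y_def)
  define d where "d i = (if i = k then 0 else - c i / c k)" for i
  have "(\<Sum>i\<in>J. d i *\<^sub>R x i) = (\<Sum>i\<in>J-{k}. d i *\<^sub>R x i)"
    by (simp add: sum.remove[OF fin k] d_def)
  also have "\<dots> = (\<Sum>i\<in>J-{k}. (- 1 / c k) *\<^sub>R (c i *\<^sub>R x i))"
    by (rule sum.cong) (auto simp: d_def)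
  also have "\<dots> = (- 1 / c k) *\<^sub>R (\<Sum>i\<in>J-{k}. c i *\<^sub>R x i)"
    by (simp add: scaleR_sum_right)
  also have "\<dots> = (- 1 / c k) *\<^sub>R (- (c k *\<^sub>R p))"
    using sumy c(2) by (metis add.commute add_eq_0_iff)
  also have "\<dots> = p" using ck by simp
  finally have pd: "(\<Sum>i\<in>J. d i *\<^sub>R x i) = p" .
  define s where "s = Min ((\<lambda>i. d i / a i) ` J)"
  have "s \<in> (\<lambda>i. d i / a i) ` J" unfolding s_def
    by (rule Min_in) (use fin \<open>J \<noteq> {}\<close> in auto)
  then obtain k' where k': "k' \<in> J" "d k' / a k' = s" by auto
  have sle: "s \<le> d i / a i" if "i \<in> J" for i
    unfolding s_def using fin that by simp
  define e where "e i = d i - s * a i" for i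
  have e0: "\<forall>i\<in>J. e i \<ge> 0"
    using sle a(1) by (auto simp: e_def pos_le_divide_eq)
  have ek: "e k' = 0" using k' a(1) by (auto simp: e_def field_simps)
  have "(\<Sum>i\<in>J. e i *\<^sub>R x i) = (\<Sum>i\<in>J. d i *\<^sub>R x i) - s *\<^sub>R (\<Sum>i\<in>J. a i *\<^sub>R x i)"
    by (simp add: e_def scaleR_diff_left sum_subtractf scaleR_sum_right)
  then have pe: "(\<Sum>i\<in>J. e i *\<^sub>R x i) = p" using pd a(2) by simp
  have "\<exists>i\<in>J. e i > 0"
  proof (rule ccontr)
    assume "\<not> ?thesis"
    then have "\<forall>i\<in>J. e i = 0" using e0 by force
    then have "(\<Sum>i\<in>J. e i *\<^sub>R x i) = 0" by simp
    then show False using pe p0 by simp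
  qed
  then have "p \<in> K k'" using CS[OF k'(1) e0 ek] pe by simp
  then show False using pK k'(1) by blast
qed

lemma gauge_facts:
  assumes "gauge Phi"
  shows "Phi 0 = 0" "\<And>x. Phi x \<ge> 0" "\<And>x t. t \<ge> 0 \<Longrightarrow> Phi (t *\<^sub>R x) = t * Phi x"
    "\<And>x. Phi x = 0 \<longleftrightarrow> x = 0"
  using assms unfolding gauge_def by auto

lemma rho_scale:
  assumes "gauge Phi" "t > 0"
  shows "rho Phi (t *\<^sub>R y) = rho Phi y"
  using gauge_facts[OF assms(1)] assms(2) by (auto simp: rho_def)

lemma rho_sphere:
  assumes "gauge Phi" "Phi x = 1"
  shows "x \<noteq> 0" "rho Phi x = x"
proof -
  show "x \<noteq> 0" using gauge_facts(1)[OF assms(1)] assms(2) by (metis zero_neq_one)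
  then show "rho Phi x = x" using assms(2) by (simp add: rho_def)
qed

lemma rho_decomp:
  assumes "gauge Phi" "y \<noteq> 0"
  shows "Phi y > 0" "y = Phi y *\<^sub>R rho Phi y"
  using gauge_facts[OF assms(1)] assms(2)
  by (auto simp: rho_def order_less_le)

lemma Kcone_add:
  assumes g: "gauge Phi" and C: "s_convex Phi C"
    and y1: "y1 \<noteq> 0" "rho Phi y1 \<in> C" and y2: "y2 \<noteq> 0" "rho Phi y2 \<in> C"
  shows "y1 + y2 \<noteq> 0 \<and> rho Phi (y1 + y2) \<in> C"
proof -
  define u1 where "u1 = rho Phi y1"
  define u2 where "u2 = rho Phi y2"
  define f1 where "f1 = Phi y1"
  define f2 where "f2 = Phi y2"
  have f1: "f1 > 0" and e1: "y1 = f1 *\<^sub>R u1" using rho_decomp[OF g y1(1)] by (auto simp: f1_def u1_def)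
  have f2: "f2 > 0" and e2: "y2 = f2 *\<^sub>R u2" using rho_decomp[OF g y2(1)] by (auto simp: f2_def u2_def)
  define mu where "mu = f1 / (f1 + f2)"
  define w where "w = mu *\<^sub>R u1 + (1 - mu) *\<^sub>R u2"
  have mu: "0 \<le> mu" "mu \<le> 1" using f1 f2 by (auto simp: mu_def)
  have "scomb Phi mu u1 u2 \<in> C" using C mu y1(2) y2(2) unfolding s_convex_def u1_def u2_def by blast
  then have rw: "rho Phi w \<in> C" by (simp add: scomb_def w_def)
  then have "Phi (rho Phi w) = 1" using C by (auto simp: s_convex_def gsphere_def)
  then have w0: "w \<noteq> 0" using gauge_facts(1)[OF g] by (metis rho_def zero_neq_one)
  have "(f1 + f2) * mu = f1" "(f1 + f2) * (1 - mu) = f2" using f1 f2 by (auto simp: mu_def field_simps)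
  then have ys: "y1 + y2 = (f1 + f2) *\<^sub>R w"
    unfolding w_def e1 e2 scaleR_add_right scaleR_scaleR by simp
  show ?thesis using w0 f1 f2 rw rho_scale[OF g, of "f1+f2" w] ys by auto
qed

theorem mainTheorem14:
  fixes Phi :: "real ^ 'n \<Rightarrow> real"
    and C :: "nat \<Rightarrow> (real ^ 'n) set"
    and m :: nat
  assumes "CARD('n) \<ge> 2"
    and "gauge Phi"
    and "m \<ge> CARD('n)"
    and "\<And>i. i \<in> {1..m} \<Longrightarrow> s_convex Phi (C i)"
    and "\<And>J. J \<subseteq> {1..m} \<Longrightarrow> card J = CARD('n) \<Longrightarrow> (\<Inter>j\<in>J. C j) \<noteq> {}"
    and "\<And>J. J \<subseteq> {1..m} \<Longrightarrow> card J = CARD('n) + 1 \<Longrightarrow> (\<Union>j\<in>J. C j) \<noteq> gsphere Phi"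
  shows "(\<Inter>i\<in>{1..m}. C i) \<noteq> {}"
proof -
  let ?n = "CARD('n)"
  note g = assms(2)
  define K where "K i = {y. y \<noteq> 0 \<and> rho Phi y \<in> C i}" for i
  have CK: "C i \<subseteq> K i" if "i \<in> {1..m}" for i
  proof
    fix x assume x: "x \<in> C i"
    then have "Phi x = 1" using assms(4)[OF that] by (auto simp: s_convex_def gsphere_def)
    then show "x \<in> K i" using rho_sphere[OF g] x by (auto simp: K_def)
  qed
  have Kadd: "a + b \<in> K j" if "j \<in> {1..m}" "a \<in> K j" "b \<in> K j" for j a b
    using Kcone_add[OF g assms(4)[OF that(1)]] that(2,3) by (auto simp: K_def)
  have Ksc: "t *\<^sub>R a \<in> K j" if "a \<in> K j" "t > 0" for j a t
    using that rho_scale[OF g that(2)] by (auto simp: K_def)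
  have K0: "0 \<notin> K j" for j by (simp add: K_def)
  have common: "\<exists>z. \<forall>j\<in>J. z \<in> K j" if J: "J \<subseteq> {1..m}" "card J \<le> ?n + 1" for J
  proof -
    have fJ: "finite J" using J finite_subset by blast
    show ?thesis
    proof (cases "card J \<le> ?n")
      case True
      have "?n - card J \<le> card ({1..m} - J)" using J assms(3) fJ by (simp add: card_Diff_subset)
      then obtain T where T: "T \<subseteq> {1..m} - J" "card T = ?n - card J" "finite T"
        by (rule obtain_subset_with_card_n)
      have "card (J \<union> T) = ?n" using T True fJ by (subst card_Un_disjoint) auto
      moreover have "J \<union> T \<subseteq> {1..m}" using T J by auto
      ultimately have "(\<Inter>j\<in>J \<union> T. C j) \<noteq> {}" using assms(5) by blast
      then obtain z where "\<forall>j\<in>J\<union>T. z \<in> C j" by blast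
      then show ?thesis using CK J by blast
    next
      case False
      then have cJ: "card J = ?n + 1" using J by simp
      have "(\<Union>j\<in>J. C j) \<subseteq> gsphere Phi" using assms(4) J unfolding s_convex_def by blast
      with assms(6)[OF J(1) cJ] obtain p where p: "p \<in> gsphere Phi" "\<forall>j\<in>J. p \<notin> C j" by blast
      have p1: "Phi p = 1" using p by (simp add: gsphere_def)
      have pK: "p \<notin> K j" if "j\<in>J" for j using rho_sphere[OF g p1] p that by (auto simp: K_def)
      have "\<forall>i\<in>J. \<exists>v. \<forall>j\<in>J-{i}. v \<in> C j"
      proof
        fix i assume i: "i\<in>J"
        have "card (J-{i}) = ?n" using cJ i fJ by simp
        moreover have "J - {i} \<subseteq> {1..m}" using J by auto
        ultimately have "(\<Inter>j\<in>J-{i}. C j) \<noteq> {}" using assms(5) by blast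
        then show "\<exists>v. \<forall>j\<in>J-{i}. v \<in> C j" by blast
      qed
      from bchoice[OF this] obtain x where x: "\<forall>i\<in>J. \<forall>j\<in>J-{i}. x i \<in> C j" by blast
      show ?thesis
      proof (rule core[where K=K and x=x and p=p and J=J])
        show "\<And>j a b. j \<in> J \<Longrightarrow> a \<in> K j \<Longrightarrow> b \<in> K j \<Longrightarrow> a + b \<in> K j" using Kadd J by blast
        show "\<And>j a t. j \<in> J \<Longrightarrow> a \<in> K j \<Longrightarrow> 0 < t \<Longrightarrow> t *\<^sub>R a \<in> K j" using Ksc by blast
        show "\<And>j. j \<in> J \<Longrightarrow> 0 \<notin> K j" using K0 by blast
        show "finite J" by fact
        show "card J = DIM(real ^ 'n) + 1" using cJ by simp
        show "\<And>i j. i \<in> J \<Longrightarrow> j \<in> J \<Longrightarrow> i \<noteq> j \<Longrightarrow> x i \<in> K j" using x CK J by blast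
        show "p \<noteq> 0" using rho_sphere[OF g p1] by simp
        show "\<And>j. j \<in> J \<Longrightarrow> p \<notin> K j" by (rule pK)
      qed
    qed
  qed
  have convK: "convex (K i)" if "i \<in> {1..m}" for i
    unfolding convex_def
  proof (intro ballI allI impI)
    fix a b and u v :: real assume ab: "a \<in> K i" "b \<in> K i" and uv: "0 \<le> u" "0 \<le> v" "u + v = 1"
    show "u *\<^sub>R a + v *\<^sub>R b \<in> K i"
    proof (cases "u = 0")
      case True then show ?thesis using uv ab by simp
    next
      case u: False
      show ?thesis
      proof (cases "v = 0")
        case True then show ?thesis using uv ab by simp
      next
        case False
        then show ?thesis using u uv ab Kadd[OF that] Ksc by simp
      qed
    qed
  qed
  define F where "F = K ` {1..m}"
  have sub: "\<exists>z. z \<in> \<Inter>t" if "t \<subseteq> F" "card t \<le> ?n + 1" for t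
  proof -
    have "t \<subseteq> K ` {1..m}" using that(1) F_def by simp
    then obtain J where J: "J \<subseteq> {1..m}" "inj_on K J" "t = K ` J"
      unfolding subset_image_inj by blast
    then have "card J \<le> ?n + 1" using that(2) by (simp add: card_image)
    then obtain z where "\<forall>j\<in>J. z \<in> K j" using common J(1) by blast
    then show ?thesis using J(3) by blast
  qed
  have "\<Inter>F \<noteq> {}"
  proof (cases "card F \<le> ?n + 1")
    case True then show ?thesis using sub[of F] by blast
  next
    case False
    show ?thesis
    proof (rule Helly)
      show "DIM(real ^ 'n) + 1 \<le> card F" using False by simp
      show "\<forall>s\<in>F. convex s" using convK F_def by blast
      fix t assume "t \<subseteq> F" "card t = DIM(real ^ 'n) + 1"
      then obtain z where "z \<in> \<Inter>t" using sub[of t] by auto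
      then show "\<Inter> t \<noteq> {}" by blast
    qed
  qed
  then obtain z where "z \<in> \<Inter>F" by blast
  then have "\<forall>i\<in>{1..m}. z \<in> K i" by (auto simp: F_def)
  then have "rho Phi z \<in> (\<Inter>i\<in>{1..m}. C i)" by (auto simp: K_def)
  then show ?thesis by blast
qed

end
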